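(* Let $k$ be a field and $\mathrm{Lin}\colon(\mathrm{Cospan}(\mathrm{FinSet}),+)\to(\mathrm{Set},\times)$ the lax symmetric monoidal functor sending a finite set $N$ to the set of linear subspaces of $k^N$, a function $f\colon N\to M$ to the map $L\mapsto\{v\in k^M\mid v\circ f\in L\}$, and an opposite function $g^{\mathrm{op}}\colon N\to M$ (for $g\colon M\to N$) to $L\mapsto\{u\circ g\mid u\in L\}$. Taking the factorisation system $(\mathcal I_{\mathrm{FinSet}},\mathrm{FinSet})$ (isomorphisms, all morphisms) on $\mathrm{FinSet}$, the decorated corelation category $\mathrm{Lin}\mathrm{Corel}$ has, as morphisms $X\to Y$, exactly the linear subspaces of $k^{X+Y}\cong k^X\oplus k^Y$, composed by relational composition; hence $\mathrm{Lin}\mathrm{Corel}$ is isomorphic to the category of linear relations between the finite-dimensional spaces $k^X$.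
   Context: For $(\mathcal E,\mathcal M)$ a costable factorisation system on $\mathcal C$ and $F\colon\mathcal C;\mathcal M^{\mathrm{op}}\to\mathrm{Set}$ lax symmetric monoidal (here $\mathcal C;\mathcal M^{\mathrm{op}}=\mathrm{Cospan}(\mathrm{FinSet})$ since $\mathcal M=\mathrm{FinSet}$), $F\mathrm{Corel}$ has morphisms isomorphism classes of pairs (cospan $X\xrightarrow{i}N\xleftarrow{o}Y$ with $[i,o]\in\mathcal E$, element $s\in FN$); composition of $(X\to N\leftarrow Y,s)$ and $(Y\to M\leftarrow Z,t)$: form the pushout $N+_YM$ with maps $j_N,j_M$, factor $[j_Ni_X,j_Mo_Z]=m\circ e$ with $e\in\mathcal E$, and decorate the cospan $X\to\overline{N+_YM}\leftarrow Z$ by $F(m^{\mathrm{op}})F[j_N,j_M]\varphi_{N,M}(s,t)$, where $m^{\mathrm{op}}=(\xrightarrow{1}\xleftarrow{m})$. The coherence map $\varphi_{N,M}$ of $\mathrm{Lin}$ sends $(L,L')$ to $L\oplus L'\subseteq k^{N+M}$. *)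

theory Defs
  imports Main
begin

text \<open>Finite sets are finite subsets of a type; apexes of cospans are finite sets of naturals.\<close>

definition kpow :: "'a set \<Rightarrow> ('a \<Rightarrow> 'k::field) set" where
  "kpow A = {v. \<forall>a. a \<notin> A \<longrightarrow> v a = 0}"

definition lin_subspace :: "'a set \<Rightarrow> ('a \<Rightarrow> 'k::field) set \<Rightarrow> bool" where
  "lin_subspace A L \<longleftrightarrow> L \<subseteq> kpow A \<and> (\<lambda>_. 0) \<in> L
     \<and> (\<forall>u\<in>L. \<forall>v\<in>L. (\<lambda>a. u a + v a) \<in> L)
     \<and> (\<forall>c. \<forall>u\<in>L. (\<lambda>a. c * u a) \<in> L)"

definition lin_push :: "'a set \<Rightarrow> 'b set \<Rightarrow> ('a \<Rightarrow> 'b) \<Rightarrow> ('a \<Rightarrow> 'k::field) set \<Rightarrow> ('b \<Rightarrow> 'k) set" where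
  "lin_push A B f L = {v \<in> kpow B. (\<lambda>a. if a \<in> A then v (f a) else 0) \<in> L}"

definition lin_pull :: "'m set \<Rightarrow> ('m \<Rightarrow> 'n) \<Rightarrow> ('n \<Rightarrow> 'k::field) set \<Rightarrow> ('m \<Rightarrow> 'k) set" where
  "lin_pull M g L = (\<lambda>u m. if m \<in> M then u (g m) else 0) ` L"

definition lin_sum :: "'a set \<Rightarrow> 'b set \<Rightarrow> ('a \<Rightarrow> 'k::field) set \<Rightarrow> ('b \<Rightarrow> 'k) set \<Rightarrow> ('a + 'b \<Rightarrow> 'k) set" where
  "lin_sum A B L1 L2 = {w \<in> kpow (A <+> B). (\<lambda>a. w (Inl a)) \<in> L1 \<and> (\<lambda>b. w (Inr b)) \<in> L2}"

record ('x, 'y, 'k) dcospan =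
  apex :: "nat set"
  leg_in :: "'x \<Rightarrow> nat"
  leg_out :: "'y \<Rightarrow> nat"
  deco :: "(nat \<Rightarrow> 'k) set"

text \<open>Decorated corelation: [i,o] lies in E (is an isomorphism).\<close>
definition is_dcorel :: "'x set \<Rightarrow> 'y set \<Rightarrow> ('x, 'y, 'k::field) dcospan \<Rightarrow> bool" where
  "is_dcorel X Y c \<longleftrightarrow> finite X \<and> finite Y \<and> finite (apex c)
     \<and> bij_betw (case_sum (leg_in c) (leg_out c)) (X <+> Y) (apex c)
     \<and> lin_subspace (apex c) (deco c)"

text \<open>Isomorphism of decorated corelations (equality of morphisms of Lin Corel).\<close>
definition dcorel_iso :: "'x set \<Rightarrow> 'y set \<Rightarrow> ('x, 'y, 'k::field) dcospan \<Rightarrow> ('x, 'y, 'k) dcospan \<Rightarrow> bool" where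
  "dcorel_iso X Y c c' \<longleftrightarrow> (\<exists>b. bij_betw b (apex c) (apex c')
     \<and> (\<forall>x\<in>X. b (leg_in c x) = leg_in c' x) \<and> (\<forall>y\<in>Y. b (leg_out c y) = leg_out c' y)
     \<and> deco c' = lin_push (apex c) (apex c') b (deco c))"

text \<open>Pushout N +_Y M of N \<leftarrow>o Y \<rightarrow>i M in FinSet, as a quotient of N + M.\<close>
definition po_rel :: "nat set \<Rightarrow> nat set \<Rightarrow> 'y set \<Rightarrow> ('y \<Rightarrow> nat) \<Rightarrow> ('y \<Rightarrow> nat) \<Rightarrow> ((nat + nat) \<times> (nat + nat)) set" where
  "po_rel N M Y o1 i2 =
     (Id_on (N <+> M) \<union> {(Inl (o1 y), Inr (i2 y)) | y. y \<in> Y} \<union> {(Inr (i2 y), Inl (o1 y)) | y. y \<in> Y})\<^sup>*"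

definition po_apex :: "nat set \<Rightarrow> nat set \<Rightarrow> 'y set \<Rightarrow> ('y \<Rightarrow> nat) \<Rightarrow> ('y \<Rightarrow> nat) \<Rightarrow> (nat + nat) set set" where
  "po_apex N M Y o1 i2 = (N <+> M) // po_rel N M Y o1 i2"

definition po_inj :: "nat set \<Rightarrow> nat set \<Rightarrow> 'y set \<Rightarrow> ('y \<Rightarrow> nat) \<Rightarrow> ('y \<Rightarrow> nat) \<Rightarrow> nat + nat \<Rightarrow> (nat + nat) set" where
  "po_inj N M Y o1 i2 a = po_rel N M Y o1 i2 `` {a}"

text \<open>c is a composite of c1 : X \<rightarrow> Y and c2 : Y \<rightarrow> Z: form the pushout, factor
  [j_N i_X, j_M o_Z] = m \<circ> e with e : X + Z \<rightarrow> apex c an isomorphism (the legs of c),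
  and decorate by Lin(m^op) Lin[j_N,j_M] \<phi>(s,t).\<close>
definition is_dcorel_comp :: "'x set \<Rightarrow> 'y set \<Rightarrow> 'z set \<Rightarrow> ('x, 'y, 'k::field) dcospan
     \<Rightarrow> ('y, 'z, 'k) dcospan \<Rightarrow> ('x, 'z, 'k) dcospan \<Rightarrow> bool" where
  "is_dcorel_comp X Y Z c1 c2 c \<longleftrightarrow>
     (let N = apex c1; M = apex c2;
          j = po_inj N M Y (leg_out c1) (leg_in c2);
          P = po_apex N M Y (leg_out c1) (leg_in c2);
          e = case_sum (leg_in c) (leg_out c);
          f = case_sum (\<lambda>x. j (Inl (leg_in c1 x))) (\<lambda>z. j (Inr (leg_out c2 z)));
          m = (\<lambda>n. f (inv_into (X <+> Z) e n))
      in finite (apex c) \<and> bij_betw e (X <+> Z) (apex c)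
         \<and> deco c = lin_pull (apex c) m (lin_push (N <+> M) P j (lin_sum N M (deco c1) (deco c2))))"

text \<open>Identity decorated corelation on X: the identity cospan, with [1,1] = m \<circ> e, e iso,
  decorated by Lin(m^op) Lin(! : \<emptyset> \<rightarrow> X) of the unit element k^\<emptyset> of Lin \<emptyset>.\<close>
definition is_dcorel_id :: "'x set \<Rightarrow> ('x, 'x, 'k::field) dcospan \<Rightarrow> bool" where
  "is_dcorel_id X c \<longleftrightarrow>
     (let e = case_sum (leg_in c) (leg_out c);
          m = (\<lambda>n. case_sum id id (inv_into (X <+> X) e n))
      in finite (apex c) \<and> bij_betw e (X <+> X) (apex c)
         \<and> deco c = lin_pull (apex c) m
              (lin_push ({} :: 'x set) X (\<lambda>_. undefined) (kpow ({} :: 'x set))))"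

definition to_rel :: "'x set \<Rightarrow> 'y set \<Rightarrow> ('x, 'y, 'k::field) dcospan \<Rightarrow> ('x + 'y \<Rightarrow> 'k) set" where
  "to_rel X Y c = lin_pull (X <+> Y) (case_sum (leg_in c) (leg_out c)) (deco c)"

definition lrel_comp :: "'x set \<Rightarrow> 'y set \<Rightarrow> 'z set \<Rightarrow> ('x + 'y \<Rightarrow> 'k::field) set
     \<Rightarrow> ('y + 'z \<Rightarrow> 'k) set \<Rightarrow> ('x + 'z \<Rightarrow> 'k) set" where
  "lrel_comp X Y Z R S = {w \<in> kpow (X <+> Z). \<exists>v \<in> kpow Y.
      case_sum (\<lambda>x. w (Inl x)) v \<in> R \<and> case_sum v (\<lambda>z. w (Inr z)) \<in> S}"

definition lrel_id :: "'x set \<Rightarrow> ('x + 'x \<Rightarrow> 'k::field) set" where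
  "lrel_id X = {w \<in> kpow (X <+> X). \<forall>x\<in>X. w (Inl x) = w (Inr x)}"

end

theory Submission
  imports Defs
begin

definition closedL :: "('a \<Rightarrow> 'k::field) set \<Rightarrow> bool" where
  "closedL L \<longleftrightarrow> (\<lambda>_. 0) \<in> L \<and> (\<forall>u\<in>L. \<forall>v\<in>L. (\<lambda>a. u a + v a) \<in> L)
     \<and> (\<forall>c. \<forall>u\<in>L. (\<lambda>a. c * u a) \<in> L)"

lemma lin_subspace_iff: "lin_subspace A L \<longleftrightarrow> L \<subseteq> kpow A \<and> closedL L"
  unfolding lin_subspace_def closedL_def by blast

lemma closedL_0: "closedL L \<Longrightarrow> (\<lambda>_. 0) \<in> L"
  unfolding closedL_def by (elim conjE)

lemma closedL_add: "closedL L \<Longrightarrow> u \<in> L \<Longrightarrow> v \<in> L \<Longrightarrow> (\<lambda>a. u a + v a) \<in> L"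
  unfolding closedL_def by (elim conjE) (erule ballE[where x=u], erule ballE[where x=v], auto)

lemma closedL_mul: "closedL L \<Longrightarrow> u \<in> L \<Longrightarrow> (\<lambda>a. c * u a) \<in> L"
  unfolding closedL_def by (elim conjE) (erule allE[where x=c], erule ballE[where x=u], auto)

lemma closedLI:
  assumes "(\<lambda>_. 0) \<in> L" "\<And>u v. u \<in> L \<Longrightarrow> v \<in> L \<Longrightarrow> (\<lambda>a. u a + v a) \<in> L"
    "\<And>c u. u \<in> L \<Longrightarrow> (\<lambda>a. c * u a) \<in> L"
  shows "closedL L"
  unfolding closedL_def using assms by simp

lemma pull_sub:
  fixes L :: "('b \<Rightarrow> 'k::field) set"
  assumes cl: "closedL L" shows "lin_subspace M (lin_pull M g L)"
proof -
  let ?F = "\<lambda>u m. if m \<in> M then u (g m) else 0"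
  have im: "lin_pull M g L = ?F ` L" unfolding lin_pull_def ..
  have 1: "lin_pull M g L \<subseteq> kpow M" unfolding im kpow_def by auto
  have "closedL (?F ` L)"
  proof (rule closedLI)
    have "(\<lambda>_. 0) = ?F (\<lambda>_. 0)" by (simp add: fun_eq_iff)
    then show "(\<lambda>_. 0) \<in> ?F ` L" using closedL_0[OF cl] by (rule image_eqI)
  next
    fix u v assume "u \<in> ?F ` L" "v \<in> ?F ` L"
    then obtain u' v' where u: "u' \<in> L" "u = ?F u'" and v: "v' \<in> L" "v = ?F v'" by blast
    have "(\<lambda>a. u a + v a) = ?F (\<lambda>a. u' a + v' a)" using u v by (simp add: fun_eq_iff)
    then show "(\<lambda>a. u a + v a) \<in> ?F ` L" using closedL_add[OF cl u(1) v(1)] by (rule image_eqI)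
  next
    fix c u assume "u \<in> ?F ` L"
    then obtain u' where u: "u' \<in> L" "u = ?F u'" by blast
    have "(\<lambda>a. c * u a) = ?F (\<lambda>a. c * u' a)" using u by (simp add: fun_eq_iff)
    then show "(\<lambda>a. c * u a) \<in> ?F ` L" using closedL_mul[OF cl u(1)] by (rule image_eqI)
  qed
  then show ?thesis using 1 unfolding lin_subspace_iff im by blast
qed

lemma push_sub:
  fixes L :: "('a \<Rightarrow> 'k::field) set"
  assumes cl: "closedL L" shows "lin_subspace B (lin_push A B f L)"
proof -
  let ?R = "\<lambda>v a. if a \<in> A then v (f a) else 0"
  have mem: "\<And>v. v \<in> lin_push A B f L \<longleftrightarrow> v \<in> kpow B \<and> ?R v \<in> L" unfolding lin_push_def by simp
  have 1: "lin_push A B f L \<subseteq> kpow B" using mem by blast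
  have "closedL (lin_push A B f L)"
  proof (rule closedLI)
    have "?R (\<lambda>_. 0) = (\<lambda>_. 0)" by (simp add: fun_eq_iff)
    then show "(\<lambda>_. 0) \<in> lin_push A B f L" using closedL_0[OF cl] unfolding mem by (simp add: kpow_def)
  next
    fix u v assume u: "u \<in> lin_push A B f L" and v: "v \<in> lin_push A B f L"
    have "?R (\<lambda>a. u a + v a) = (\<lambda>a. ?R u a + ?R v a)" by (simp add: fun_eq_iff)
    moreover have "(\<lambda>a. ?R u a + ?R v a) \<in> L" using closedL_add[OF cl] u v unfolding mem by blast
    moreover have "(\<lambda>a. u a + v a) \<in> kpow B" using u v unfolding mem by (simp add: kpow_def)
    ultimately show "(\<lambda>a. u a + v a) \<in> lin_push A B f L" unfolding mem by simp
  next
    fix c u assume u: "u \<in> lin_push A B f L"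
    have "?R (\<lambda>a. c * u a) = (\<lambda>a. c * ?R u a)" by (simp add: fun_eq_iff)
    moreover have "(\<lambda>a. c * ?R u a) \<in> L" using closedL_mul[OF cl] u unfolding mem by blast
    moreover have "(\<lambda>a. c * u a) \<in> kpow B" using u unfolding mem by (simp add: kpow_def)
    ultimately show "(\<lambda>a. c * u a) \<in> lin_push A B f L" unfolding mem by simp
  qed
  then show ?thesis using 1 unfolding lin_subspace_iff by blast
qed

lemma sum_sub:
  assumes c1: "closedL L1" and c2: "closedL L2" shows "lin_subspace (A <+> B) (lin_sum A B L1 L2)"
proof -
  have mem: "\<And>w. w \<in> lin_sum A B L1 L2 \<longleftrightarrow> w \<in> kpow (A <+> B) \<and> (\<lambda>a. w (Inl a)) \<in> L1 \<and> (\<lambda>b. w (Inr b)) \<in> L2"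
    unfolding lin_sum_def by simp
  have "closedL (lin_sum A B L1 L2)"
  proof (rule closedLI)
    show "(\<lambda>_. 0) \<in> lin_sum A B L1 L2" unfolding mem using closedL_0[OF c1] closedL_0[OF c2]
      by (simp add: kpow_def)
  next
    fix u v assume u: "u \<in> lin_sum A B L1 L2" and v: "v \<in> lin_sum A B L1 L2"
    show "(\<lambda>a. u a + v a) \<in> lin_sum A B L1 L2" unfolding mem
      using u v closedL_add[OF c1, of "\<lambda>a. u (Inl a)" "\<lambda>a. v (Inl a)"]
        closedL_add[OF c2, of "\<lambda>a. u (Inr a)" "\<lambda>a. v (Inr a)"] unfolding mem by (simp add: kpow_def)
  next
    fix c u assume u: "u \<in> lin_sum A B L1 L2"
    show "(\<lambda>a. c * u a) \<in> lin_sum A B L1 L2" unfolding mem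
      using u closedL_mul[OF c1, of "\<lambda>a. u (Inl a)" c]
        closedL_mul[OF c2, of "\<lambda>a. u (Inr a)" c] unfolding mem by (simp add: kpow_def)
  qed
  moreover have "lin_sum A B L1 L2 \<subseteq> kpow (A <+> B)" using mem by blast
  ultimately show ?thesis unfolding lin_subspace_iff by blast
qed

lemma sub_closed: "lin_subspace A L \<Longrightarrow> closedL L"
  unfolding lin_subspace_iff by blast

lemma pull_char:
  assumes "bij_betw e A N" "L \<subseteq> kpow N"
  shows "w \<in> lin_pull A e L \<longleftrightarrow> w \<in> kpow A \<and> (\<lambda>n. if n \<in> N then w (inv_into A e n) else 0) \<in> L"
proof
  assume "w \<in> lin_pull A e L"
  then obtain u where u: "u \<in> L" "w = (\<lambda>m. if m \<in> A then u (e m) else 0)" unfolding lin_pull_def by auto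
  have "(\<lambda>n. if n \<in> N then w (inv_into A e n) else 0) = u"
  proof
    fix n show "(if n \<in> N then w (inv_into A e n) else 0) = u n"
    proof (cases "n \<in> N")
      case True
      then have "inv_into A e n \<in> A" "e (inv_into A e n) = n" using assms(1)
        by (auto simp: bij_betw_def inv_into_into f_inv_into_f)
      then show ?thesis using True u by simp
    next
      case False then show ?thesis using u assms(2) unfolding kpow_def by auto
    qed
  qed
  then show "w \<in> kpow A \<and> (\<lambda>n. if n \<in> N then w (inv_into A e n) else 0) \<in> L"
    using u unfolding kpow_def by auto
next
  assume a: "w \<in> kpow A \<and> (\<lambda>n. if n \<in> N then w (inv_into A e n) else 0) \<in> L"
  let ?u = "(\<lambda>n. if n \<in> N then w (inv_into A e n) else 0)"
  have "w = (\<lambda>m. if m \<in> A then ?u (e m) else 0)"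
  proof
    fix m show "w m = (if m \<in> A then ?u (e m) else 0)"
      using a assms(1) by (auto simp: kpow_def bij_betw_def inv_into_f_f)
  qed
  then have eqw: "w = (\<lambda>u m. if m \<in> A then u (e m) else 0) ?u" by simp
  have "?u \<in> L" using a by blast
  with eqw show "w \<in> lin_pull A e L" unfolding lin_pull_def by (rule image_eqI)
qed

lemma pull_pull: assumes "h ` A \<subseteq> N" shows "lin_pull A h (lin_pull N g L) = lin_pull A (\<lambda>a. g (h a)) L"
  unfolding lin_pull_def image_image
  by (rule image_cong) (use assms in \<open>auto intro!: ext simp: image_subset_iff\<close>)

lemma pull_cong: "(\<And>a. a \<in> A \<Longrightarrow> g a = g' a) \<Longrightarrow> lin_pull A g L = lin_pull A g' L"
  unfolding lin_pull_def
  by (rule image_cong) (auto intro!: ext)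

lemma pull_id: "L \<subseteq> kpow A \<Longrightarrow> lin_pull A (\<lambda>a. a) L = L"
proof -
  assume L: "L \<subseteq> kpow A"
  have "lin_pull A (\<lambda>a. a) L = (\<lambda>u. u) ` L" unfolding lin_pull_def
  proof (rule image_cong)
    fix u assume "u \<in> L" then have "u \<in> kpow A" using L by blast
    then show "(\<lambda>m. if m \<in> A then u m else 0) = u" unfolding kpow_def by auto
  qed simp
  then show ?thesis by simp
qed

lemma cs_eta: "case_sum (\<lambda>x. h (Inl x)) (\<lambda>y. h (Inr y)) = h"
  by (rule ext) (simp split: sum.split)

lemma to_rel_mem:
  assumes "is_dcorel X Y c"
  shows "w \<in> to_rel X Y c \<longleftrightarrow> w \<in> kpow (X <+> Y) \<and>
    (\<lambda>n. if n \<in> apex c then w (inv_into (X <+> Y) (case_sum (leg_in c) (leg_out c)) n) else 0) \<in> deco c"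
  unfolding to_rel_def
  by (rule pull_char) (use assms in \<open>auto simp: is_dcorel_def lin_subspace_def\<close>)

lemma part1: "is_dcorel X Y c \<Longrightarrow> lin_subspace (X <+> Y) (to_rel X Y c)"
  unfolding to_rel_def is_dcorel_def by (metis pull_sub sub_closed)

lemma part3:
  assumes "finite X" "finite Y" "lin_subspace (X <+> Y) R"
  shows "\<exists>c :: ('x, 'y, 'k::field) dcospan. is_dcorel X Y c \<and> to_rel X Y c = R"
proof -
  let ?A = "X <+> Y"
  have fA: "finite ?A" using assms by simp
  obtain h where h: "bij_betw h ?A {0..<card ?A}" using ex_bij_betw_finite_nat[OF fA] by blast
  let ?N = "{0..<card ?A}"
  define c :: "('x, 'y, 'k) dcospan" where "c = \<lparr>apex = ?N, leg_in = \<lambda>x. h (Inl x),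
     leg_out = \<lambda>y. h (Inr y), deco = lin_pull ?N (inv_into ?A h) R\<rparr>"
  have e: "case_sum (leg_in c) (leg_out c) = h" unfolding c_def by (simp add: cs_eta)
  have "lin_subspace ?N (lin_pull ?N (inv_into ?A h) R)"
    using assms(3) by (metis pull_sub sub_closed)
  then have "is_dcorel X Y c" unfolding is_dcorel_def
    using assms h e by (simp add: c_def)
  moreover have "to_rel X Y c = R"
  proof -
    have "to_rel X Y c = lin_pull ?A h (lin_pull ?N (inv_into ?A h) R)"
      unfolding to_rel_def e by (simp add: c_def)
    also have "\<dots> = lin_pull ?A (\<lambda>a. inv_into ?A h (h a)) R"
      by (rule pull_pull) (use h in \<open>auto simp: bij_betw_def\<close>)
    also have "\<dots> = lin_pull ?A (\<lambda>a. a) R"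
      by (rule pull_cong) (use h in \<open>auto simp: bij_betw_def\<close>)
    also have "\<dots> = R" using assms(3) by (simp add: pull_id lin_subspace_def)
    finally show ?thesis .
  qed
  ultimately show ?thesis by blast
qed

lemma part2:
  fixes c c' :: "('x, 'y, 'k::field) dcospan"
  assumes c: "is_dcorel X Y c" and c': "is_dcorel X Y c'"
  shows "to_rel X Y c = to_rel X Y c' \<longleftrightarrow> dcorel_iso X Y c c'"
proof -
  let ?A = "X <+> Y"
  define e where "e = case_sum (leg_in c) (leg_out c)"
  define e' where "e' = case_sum (leg_in c') (leg_out c')"
  define N where "N = apex c"
  define N' where "N' = apex c'"
  have be: "bij_betw e ?A N" and be': "bij_betw e' ?A N'"
    using c c' by (auto simp: is_dcorel_def e_def e'_def N_def N'_def)
  have D: "deco c \<subseteq> kpow N" and D': "deco c' \<subseteq> kpow N'"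
    using c c' by (auto simp: is_dcorel_def lin_subspace_def N_def N'_def)
  define T :: "('x + 'y \<Rightarrow> 'k) \<Rightarrow> nat \<Rightarrow> 'k" where "T = (\<lambda>w n. if n \<in> N then w (inv_into ?A e n) else 0)"
  define T' :: "('x + 'y \<Rightarrow> 'k) \<Rightarrow> nat \<Rightarrow> 'k" where "T' = (\<lambda>w n. if n \<in> N' then w (inv_into ?A e' n) else 0)"
  have mem: "\<And>w. w \<in> to_rel X Y c \<longleftrightarrow> w \<in> kpow ?A \<and> T w \<in> deco c"
    unfolding T_def e_def N_def by (rule to_rel_mem[OF c])
  have mem': "\<And>w. w \<in> to_rel X Y c' \<longleftrightarrow> w \<in> kpow ?A \<and> T' w \<in> deco c'"
    unfolding T'_def e'_def N'_def by (rule to_rel_mem[OF c'])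
  have eA: "\<And>a. a \<in> ?A \<Longrightarrow> e a \<in> N" and eA': "\<And>a. a \<in> ?A \<Longrightarrow> e' a \<in> N'"
    using be be' by (auto simp: bij_betw_def)
  have ie: "\<And>n. n \<in> N \<Longrightarrow> inv_into ?A e n \<in> ?A \<and> e (inv_into ?A e n) = n"
    using be by (auto simp: bij_betw_def inv_into_into f_inv_into_f)
  have ie': "\<And>n. n \<in> N' \<Longrightarrow> inv_into ?A e' n \<in> ?A \<and> e' (inv_into ?A e' n) = n"
    using be' by (auto simp: bij_betw_def inv_into_into f_inv_into_f)
  have ei: "\<And>a. a \<in> ?A \<Longrightarrow> inv_into ?A e (e a) = a"
    using be by (auto simp: bij_betw_def inv_into_f_f)
  have ei': "\<And>a. a \<in> ?A \<Longrightarrow> inv_into ?A e' (e' a) = a"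
    using be' by (auto simp: bij_betw_def inv_into_f_f)
  show ?thesis
  proof
    assume eq: "to_rel X Y c = to_rel X Y c'"
    define b where "b = (\<lambda>n. e' (inv_into ?A e n))"
    have bb: "bij_betw b N N'" unfolding b_def
      using bij_betw_trans[OF bij_betw_inv_into[OF be] be'] by (simp add: comp_def)
    have legs1: "\<forall>x\<in>X. b (leg_in c x) = leg_in c' x"
    proof
      fix x assume "x \<in> X"
      then have "inv_into ?A e (leg_in c x) = Inl x" using ei[of "Inl x"] by (simp add: e_def InlI)
      then show "b (leg_in c x) = leg_in c' x" by (simp add: b_def e'_def)
    qed
    have legs2: "\<forall>y\<in>Y. b (leg_out c y) = leg_out c' y"
    proof
      fix y assume "y \<in> Y"
      then have "inv_into ?A e (leg_out c y) = Inr y" using ei[of "Inr y"] by (simp add: e_def InrI)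
      then show "b (leg_out c y) = leg_out c' y" by (simp add: b_def e'_def)
    qed
    have "deco c' = lin_push N N' b (deco c)"
    proof (rule set_eqI)
      fix v
      show "v \<in> deco c' \<longleftrightarrow> v \<in> lin_push N N' b (deco c)"
      proof (cases "v \<in> kpow N'")
        case False then show ?thesis using D' unfolding lin_push_def by auto
      next
        case True
        define w where "w = (\<lambda>a. if a \<in> ?A then v (e' a) else 0)"
        have wk: "w \<in> kpow ?A" unfolding w_def kpow_def by auto
        have 1: "T' w = v"
        proof
          fix n show "T' w n = v n"
            using True ie' unfolding T'_def w_def kpow_def by auto
        qed
        have 2: "T w = (\<lambda>a. if a \<in> N then v (b a) else 0)"
        proof
          fix n show "T w n = (if n \<in> N then v (b n) else 0)"
            using ie unfolding T_def w_def b_def by auto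
        qed
        have "v \<in> deco c' \<longleftrightarrow> w \<in> to_rel X Y c'" using mem' wk 1 by simp
        also have "\<dots> \<longleftrightarrow> w \<in> to_rel X Y c" using eq by simp
        also have "\<dots> \<longleftrightarrow> (\<lambda>a. if a \<in> N then v (b a) else 0) \<in> deco c" using mem wk 2 by simp
        finally show ?thesis using True unfolding lin_push_def by simp
      qed
    qed
    then show "dcorel_iso X Y c c'" unfolding dcorel_iso_def
      using bb legs1 legs2 unfolding N_def N'_def by blast
  next
    assume "dcorel_iso X Y c c'"
    then obtain b where bb: "bij_betw b N N'" and l1: "\<forall>x\<in>X. b (leg_in c x) = leg_in c' x"
      and l2: "\<forall>y\<in>Y. b (leg_out c y) = leg_out c' y" and dc: "deco c' = lin_push N N' b (deco c)"
      unfolding dcorel_iso_def N_def N'_def by auto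
    have be2: "\<And>a. a \<in> ?A \<Longrightarrow> b (e a) = e' a"
      using l1 l2 unfolding e_def e'_def by auto
    have key: "\<And>w. (\<lambda>a. if a \<in> N then T' w (b a) else 0) = T w"
    proof
      fix w n show "(if n \<in> N then T' w (b n) else 0) = T w n"
      proof (cases "n \<in> N")
        case True
        then obtain a where a: "a \<in> ?A" "n = e a" using ie[OF True] by metis
        have "b n \<in> N'" using bb True by (auto simp: bij_betw_def)
        moreover have "inv_into ?A e' (b n) = inv_into ?A e n" using a be2 ei ei' by simp
        ultimately show ?thesis using True unfolding T_def T'_def by simp
      next
        case False then show ?thesis by (simp add: T_def)
      qed
    qed
    have tk: "\<And>w. T' w \<in> kpow N'" unfolding T'_def kpow_def by auto
    show "to_rel X Y c = to_rel X Y c'"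
    proof (rule set_eqI)
      fix w
      have "w \<in> to_rel X Y c' \<longleftrightarrow> w \<in> kpow ?A \<and> T' w \<in> deco c'" by (rule mem')
      also have "\<dots> \<longleftrightarrow> w \<in> kpow ?A \<and> (\<lambda>a. if a \<in> N then T' w (b a) else 0) \<in> deco c"
        unfolding dc lin_push_def using tk[of w] by simp
      also have "\<dots> \<longleftrightarrow> w \<in> to_rel X Y c" unfolding key by (rule mem[symmetric])
      finally show "w \<in> to_rel X Y c \<longleftrightarrow> w \<in> to_rel X Y c'" by blast
    qed
  qed
qed


lemma kpow_closed: "closedL (kpow A)"
  by (rule closedLI) (auto simp: kpow_def)

lemma part5_ex:
  assumes "finite X"
  shows "\<exists>c :: ('x, 'x, 'k::field) dcospan. is_dcorel_id X c"
proof -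
  let ?A = "X <+> X"
  have fA: "finite ?A" using assms by simp
  obtain h where h: "bij_betw h ?A {0..<card ?A}" using ex_bij_betw_finite_nat[OF fA] by blast
  let ?N = "{0..<card ?A}"
  define c :: "('x, 'x, 'k) dcospan" where "c = \<lparr>apex = ?N, leg_in = \<lambda>x. h (Inl x),
     leg_out = \<lambda>y. h (Inr y), deco = lin_pull ?N (\<lambda>n. case_sum id id (inv_into ?A h n))
       (lin_push ({} :: 'x set) X (\<lambda>_. undefined) (kpow ({} :: 'x set)))\<rparr>"
  have e: "case_sum (leg_in c) (leg_out c) = h" unfolding c_def by (simp add: cs_eta)
  have "is_dcorel_id X c" unfolding is_dcorel_id_def Let_def e using h by (simp add: c_def)
  then show ?thesis by blast
qed

lemma part5:
  fixes c :: "('x, 'x, 'k::field) dcospan"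
  assumes fX: "finite X" and ci: "is_dcorel_id X c"
  shows "is_dcorel X X c \<and> to_rel X X c = lrel_id X"
proof -
  let ?A = "X <+> X"
  define e where "e = case_sum (leg_in c) (leg_out c)"
  define m where "m = (\<lambda>n. case_sum id id (inv_into ?A e n))"
  define K :: "('x \<Rightarrow> 'k) set" where "K = lin_push ({} :: 'x set) X (\<lambda>_. undefined) (kpow ({} :: 'x set))"
  have cc: "finite (apex c)" "bij_betw e ?A (apex c)" "deco c = lin_pull (apex c) m K"
    using ci unfolding is_dcorel_id_def Let_def e_def m_def K_def by auto
  have K: "K = kpow X" unfolding K_def lin_push_def by (auto simp: kpow_def)
  have sub: "lin_subspace (apex c) (deco c)" unfolding cc(3) K by (rule pull_sub[OF kpow_closed])
  have "is_dcorel X X c" unfolding is_dcorel_def using fX cc sub e_def by simp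
  moreover have "to_rel X X c = lrel_id X"
  proof -
    have "to_rel X X c = lin_pull ?A e (lin_pull (apex c) m (kpow X))"
      unfolding to_rel_def e_def[symmetric] cc(3) K ..
    also have "\<dots> = lin_pull ?A (\<lambda>a. m (e a)) (kpow X)"
      by (rule pull_pull) (use cc(2) in \<open>auto simp: bij_betw_def\<close>)
    also have "\<dots> = lin_pull ?A (case_sum id id) (kpow X)"
      by (rule pull_cong) (use cc(2) in \<open>auto simp: bij_betw_def m_def inv_into_f_f\<close>)
    also have "\<dots> = lrel_id X"
    proof (rule set_eqI)
      fix w :: "'x + 'x \<Rightarrow> 'k"
      show "w \<in> lin_pull ?A (case_sum id id) (kpow X) \<longleftrightarrow> w \<in> lrel_id X"
      proof
        assume "w \<in> lin_pull ?A (case_sum id id) (kpow X)"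
        then obtain u where u: "u \<in> kpow X" "w = (\<lambda>a. if a \<in> ?A then u (case_sum id id a) else 0)"
          unfolding lin_pull_def by blast
        show "w \<in> lrel_id X" unfolding lrel_id_def kpow_def using u by auto
      next
        assume w: "w \<in> lrel_id X"
        define u where "u = (\<lambda>x. w (Inl x))"
        have uk: "u \<in> kpow X" using w unfolding lrel_id_def kpow_def u_def by auto
        have "w = (\<lambda>a. if a \<in> ?A then u (case_sum id id a) else 0)"
        proof
          fix a show "w a = (if a \<in> ?A then u (case_sum id id a) else 0)"
            using w unfolding lrel_id_def kpow_def u_def by (cases a) auto
        qed
        then show "w \<in> lin_pull ?A (case_sum id id) (kpow X)" unfolding lin_pull_def
          using uk by blast
      qed
    qed
    finally show ?thesis .
  qed
  ultimately show ?thesis by blast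
qed


lemma part4_ex:
  fixes c1 :: "('x, 'y, 'k::field) dcospan" and c2 :: "('y, 'z, 'k) dcospan"
  assumes "finite X" "finite Z"
  shows "\<exists>c. is_dcorel_comp X Y Z c1 c2 c"
proof -
  let ?A = "X <+> Z"
  have fA: "finite ?A" using assms by simp
  obtain h where h: "bij_betw h ?A {0..<card ?A}" using ex_bij_betw_finite_nat[OF fA] by blast
  let ?N = "{0..<card ?A}"
  define j where "j = po_inj (apex c1) (apex c2) Y (leg_out c1) (leg_in c2)"
  define P where "P = po_apex (apex c1) (apex c2) Y (leg_out c1) (leg_in c2)"
  define f where "f = case_sum (\<lambda>x. j (Inl (leg_in c1 x))) (\<lambda>z. j (Inr (leg_out c2 z)))"
  define Q where "Q = lin_push (apex c1 <+> apex c2) P j (lin_sum (apex c1) (apex c2) (deco c1) (deco c2))"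
  define c :: "('x, 'z, 'k) dcospan" where "c = \<lparr>apex = ?N, leg_in = \<lambda>x. h (Inl x),
     leg_out = \<lambda>y. h (Inr y), deco = lin_pull ?N (\<lambda>n. f (inv_into ?A h n)) Q\<rparr>"
  have e: "case_sum (leg_in c) (leg_out c) = h" unfolding c_def by (simp add: cs_eta)
  have "is_dcorel_comp X Y Z c1 c2 c" unfolding is_dcorel_comp_def Let_def e
    using h unfolding j_def[symmetric] P_def[symmetric] f_def[symmetric] Q_def[symmetric]
    by (simp add: c_def)
  then show ?thesis by blast
qed

lemma part4:
  fixes c1 :: "('x, 'y, 'k::field) dcospan" and c2 :: "('y, 'z, 'k) dcospan" and c :: "('x, 'z, 'k) dcospan"
  assumes fX: "finite X" and fY: "finite Y" and fZ: "finite Z"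
    and h1: "is_dcorel X Y c1" and h2: "is_dcorel Y Z c2" and cc: "is_dcorel_comp X Y Z c1 c2 c"
  shows "is_dcorel X Z c \<and> to_rel X Z c = lrel_comp X Y Z (to_rel X Y c1) (to_rel Y Z c2)"
proof -
  define N where "N = apex c1"
  define M where "M = apex c2"
  define i1 where "i1 = leg_in c1"
  define o1 where "o1 = leg_out c1"
  define i2 where "i2 = leg_in c2"
  define o2 where "o2 = leg_out c2"
  define D1 where "D1 = deco c1"
  define D2 where "D2 = deco c2"
  define R where "R = po_rel N M Y o1 i2"
  define j where "j = po_inj N M Y o1 i2"
  define P where "P = po_apex N M Y o1 i2"
  define f where "f = case_sum (\<lambda>x. j (Inl (i1 x))) (\<lambda>z. j (Inr (o2 z)))"
  define S where "S = lin_sum N M D1 D2"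
  define Q where "Q = lin_push (N <+> M) P j S"
  define e where "e = case_sum (leg_in c) (leg_out c)"
  define m where "m = (\<lambda>n. f (inv_into (X <+> Z) e n))"
  have cc': "finite (apex c)" "bij_betw e (X <+> Z) (apex c)" "deco c = lin_pull (apex c) m Q"
    using cc unfolding is_dcorel_comp_def Let_def e_def m_def f_def Q_def S_def P_def j_def
      N_def M_def i1_def o1_def i2_def o2_def D1_def D2_def by auto
  have b1: "bij_betw (case_sum i1 o1) (X <+> Y) N" and b2: "bij_betw (case_sum i2 o2) (Y <+> Z) M"
    using h1 h2 unfolding is_dcorel_def i1_def o1_def i2_def o2_def N_def M_def by auto
  have i1N: "\<And>x. x \<in> X \<Longrightarrow> i1 x \<in> N" using b1 unfolding bij_betw_def by (force simp: image_subset_iff)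
  have o1N: "\<And>y. y \<in> Y \<Longrightarrow> o1 y \<in> N" using b1 unfolding bij_betw_def by (force simp: image_subset_iff)
  have i2M: "\<And>y. y \<in> Y \<Longrightarrow> i2 y \<in> M" using b2 unfolding bij_betw_def by (force simp: image_subset_iff)
  have o2M: "\<And>z. z \<in> Z \<Longrightarrow> o2 z \<in> M" using b2 unfolding bij_betw_def by (force simp: image_subset_iff)
  have s1: "lin_subspace N D1" and s2: "lin_subspace M D2"
    using h1 h2 unfolding is_dcorel_def N_def M_def D1_def D2_def by auto
  have D1k: "D1 \<subseteq> kpow N" and D2k: "D2 \<subseteq> kpow M" using s1 s2 unfolding lin_subspace_def by auto
  have Ssub: "lin_subspace (N <+> M) S" unfolding S_def by (rule sum_sub[OF sub_closed[OF s1] sub_closed[OF s2]])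
  have Qsub: "lin_subspace P Q" unfolding Q_def by (rule push_sub[OF sub_closed[OF Ssub]])
  have csub: "lin_subspace (apex c) (deco c)" unfolding cc'(3) by (rule pull_sub[OF sub_closed[OF Qsub]])
  have isc: "is_dcorel X Z c" unfolding is_dcorel_def using fX fZ cc' csub e_def by simp
  define B where "B = Id_on (N <+> M) \<union> {(Inl (o1 y), Inr (i2 y)) | y. y \<in> Y} \<union> {(Inr (i2 y), Inl (o1 y)) | y. y \<in> Y}"
  have RB: "R = B\<^sup>*" unfolding R_def B_def po_rel_def ..
  have symB: "sym B" unfolding B_def sym_def by auto
  have eqR: "equiv UNIV R" unfolding RB
    by (rule equivI) (auto simp: refl_rtrancl sym_rtrancl[OF symB] trans_rtrancl)
  have jR: "\<And>a. j a = R `` {a}" unfolding j_def R_def po_inj_def ..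
  have jeq: "\<And>y. y \<in> Y \<Longrightarrow> j (Inl (o1 y)) = j (Inr (i2 y))"
  proof -
    fix y assume "y \<in> Y"
    then have "(Inl (o1 y), Inr (i2 y)) \<in> R" unfolding RB B_def by (intro r_into_rtrancl) blast
    then show "j (Inl (o1 y)) = j (Inr (i2 y))" unfolding jR using equiv_class_eq_iff[OF eqR] by blast
  qed
  have self: "\<And>a. a \<in> j a" unfolding jR RB by blast
  have jP: "\<And>a. a \<in> N <+> M \<Longrightarrow> j a \<in> P" unfolding jR P_def po_apex_def R_def[symmetric]
    by (rule quotientI)
  have const: "\<And>(g :: nat + nat \<Rightarrow> 'k) a b. (\<forall>y\<in>Y. g (Inl (o1 y)) = g (Inr (i2 y))) \<Longrightarrow> (a, b) \<in> R \<Longrightarrow> g a = g b"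
  proof -
    fix g :: "nat + nat \<Rightarrow> 'k" and a b
    assume ag: "\<forall>y\<in>Y. g (Inl (o1 y)) = g (Inr (i2 y))" and ab: "(a, b) \<in> R"
    from ab[unfolded RB] show "g a = g b"
    proof (induction rule: rtrancl_induct)
      case base then show ?case by simp
    next
      case (step b c) then show ?case using ag unfolding B_def by auto
    qed
  qed
  have Qmem: "\<And>v. v \<in> Q \<longleftrightarrow> v \<in> kpow P \<and> (\<lambda>a. if a \<in> N <+> M then v (j a) else 0) \<in> S"
    unfolding Q_def lin_push_def by simp
  have Smem: "\<And>s. s \<in> S \<longleftrightarrow> s \<in> kpow (N <+> M) \<and> (\<lambda>a. s (Inl a)) \<in> D1 \<and> (\<lambda>b. s (Inr b)) \<in> D2"
    unfolding S_def lin_sum_def by simp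
  have tr: "to_rel X Z c = lin_pull (X <+> Z) f Q"
  proof -
    have "to_rel X Z c = lin_pull (X <+> Z) e (lin_pull (apex c) m Q)"
      unfolding to_rel_def e_def[symmetric] cc'(3) ..
    also have "\<dots> = lin_pull (X <+> Z) (\<lambda>a. m (e a)) Q"
      by (rule pull_pull) (use cc'(2) in \<open>auto simp: bij_betw_def\<close>)
    also have "\<dots> = lin_pull (X <+> Z) f Q"
      by (rule pull_cong) (use cc'(2) in \<open>auto simp: bij_betw_def m_def inv_into_f_f\<close>)
    finally show ?thesis .
  qed
  have t1: "to_rel X Y c1 = lin_pull (X <+> Y) (case_sum i1 o1) D1"
    unfolding to_rel_def i1_def o1_def D1_def ..
  have t2: "to_rel Y Z c2 = lin_pull (Y <+> Z) (case_sum i2 o2) D2"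
    unfolding to_rel_def i2_def o2_def D2_def ..
  have main: "lin_pull (X <+> Z) f Q = lrel_comp X Y Z (lin_pull (X <+> Y) (case_sum i1 o1) D1)
      (lin_pull (Y <+> Z) (case_sum i2 o2) D2)"
  proof (rule set_eqI, rule iffI)
    fix w assume "w \<in> lin_pull (X <+> Z) f Q"
    then obtain v where vQ: "v \<in> Q" and w: "w = (\<lambda>a. if a \<in> X <+> Z then v (f a) else 0)"
      unfolding lin_pull_def by blast
    define s where "s = (\<lambda>a. if a \<in> N <+> M then v (j a) else 0)"
    have sS: "s \<in> S" using vQ unfolding Qmem s_def by blast
    have u1: "(\<lambda>a. s (Inl a)) \<in> D1" and u2: "(\<lambda>b. s (Inr b)) \<in> D2" using sS unfolding Smem by auto
    define vy where "vy = (\<lambda>y. if y \<in> Y then v (j (Inl (o1 y))) else 0)"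
    have vyk: "vy \<in> kpow Y" unfolding vy_def kpow_def by auto
    have wk: "w \<in> kpow (X <+> Z)" unfolding w kpow_def by auto
    have e1: "case_sum (\<lambda>x. w (Inl x)) vy = (\<lambda>a. if a \<in> X <+> Y then (\<lambda>a. s (Inl a)) (case_sum i1 o1 a) else 0)"
    proof
      fix a show "case_sum (\<lambda>x. w (Inl x)) vy a = (if a \<in> X <+> Y then (\<lambda>a. s (Inl a)) (case_sum i1 o1 a) else 0)"
        by (cases a) (auto simp: w vy_def s_def f_def i1N o1N)
    qed
    have e2: "case_sum vy (\<lambda>z. w (Inr z)) = (\<lambda>a. if a \<in> Y <+> Z then (\<lambda>b. s (Inr b)) (case_sum i2 o2 a) else 0)"
    proof
      fix a show "case_sum vy (\<lambda>z. w (Inr z)) a = (if a \<in> Y <+> Z then (\<lambda>b. s (Inr b)) (case_sum i2 o2 a) else 0)"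
        by (cases a) (auto simp: w vy_def s_def f_def i2M o2M jeq)
    qed
    have "case_sum (\<lambda>x. w (Inl x)) vy \<in> lin_pull (X <+> Y) (case_sum i1 o1) D1"
      unfolding lin_pull_def using e1 u1 by (rule image_eqI)
    moreover have "case_sum vy (\<lambda>z. w (Inr z)) \<in> lin_pull (Y <+> Z) (case_sum i2 o2) D2"
      unfolding lin_pull_def using e2 u2 by (rule image_eqI)
    ultimately show "w \<in> lrel_comp X Y Z (lin_pull (X <+> Y) (case_sum i1 o1) D1)
      (lin_pull (Y <+> Z) (case_sum i2 o2) D2)" unfolding lrel_comp_def using wk vyk by blast
  next
    fix w assume "w \<in> lrel_comp X Y Z (lin_pull (X <+> Y) (case_sum i1 o1) D1)
      (lin_pull (Y <+> Z) (case_sum i2 o2) D2)"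
    then obtain vy where wk: "w \<in> kpow (X <+> Z)" and vyk: "vy \<in> kpow Y"
      and m1: "case_sum (\<lambda>x. w (Inl x)) vy \<in> lin_pull (X <+> Y) (case_sum i1 o1) D1"
      and m2: "case_sum vy (\<lambda>z. w (Inr z)) \<in> lin_pull (Y <+> Z) (case_sum i2 o2) D2"
      unfolding lrel_comp_def by blast
    from m1 obtain u1 where u1: "u1 \<in> D1"
      and q1: "case_sum (\<lambda>x. w (Inl x)) vy = (\<lambda>a. if a \<in> X <+> Y then u1 (case_sum i1 o1 a) else 0)"
      unfolding lin_pull_def by blast
    from m2 obtain u2 where u2: "u2 \<in> D2"
      and q2: "case_sum vy (\<lambda>z. w (Inr z)) = (\<lambda>a. if a \<in> Y <+> Z then u2 (case_sum i2 o2 a) else 0)"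
      unfolding lin_pull_def by blast
    have wx: "\<And>x. x \<in> X \<Longrightarrow> w (Inl x) = u1 (i1 x)" using fun_cong[OF q1, of "Inl x" for x] by (auto simp: InlI InrI)
    have vy1: "\<And>y. y \<in> Y \<Longrightarrow> vy y = u1 (o1 y)" using fun_cong[OF q1, of "Inr y" for y] by (auto simp: InlI InrI)
    have vy2: "\<And>y. y \<in> Y \<Longrightarrow> vy y = u2 (i2 y)" using fun_cong[OF q2, of "Inl y" for y] by (auto simp: InlI InrI)
    have wz: "\<And>z. z \<in> Z \<Longrightarrow> w (Inr z) = u2 (o2 z)" using fun_cong[OF q2, of "Inr z" for z] by (auto simp: InlI InrI)
    define g where "g = case_sum u1 u2"
    have ag: "\<forall>y\<in>Y. g (Inl (o1 y)) = g (Inr (i2 y))" using vy1 vy2 unfolding g_def by simp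
    define v where "v = (\<lambda>C. if C \<in> P then g (SOME a. a \<in> C) else 0)"
    have pj: "\<And>a. a \<in> N <+> M \<Longrightarrow> v (j a) = g a"
    proof -
      fix a assume a: "a \<in> N <+> M"
      have "(SOME a'. a' \<in> j a) \<in> j a" using self by (rule someI)
      then have "(a, SOME a'. a' \<in> j a) \<in> R" unfolding jR by blast
      then have "g a = g (SOME a'. a' \<in> j a)" by (rule const[OF ag])
      then show "v (j a) = g a" unfolding v_def using jP[OF a] by simp
    qed
    have u1k: "u1 \<in> kpow N" and u2k: "u2 \<in> kpow M" using u1 u2 D1k D2k by auto
    have sg: "(\<lambda>a. if a \<in> N <+> M then v (j a) else 0) = g"
    proof
      fix a show "(if a \<in> N <+> M then v (j a) else 0) = g a"
      proof (cases "a \<in> N <+> M")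
        case True then show ?thesis using pj by simp
      next
        case False then show ?thesis using u1k u2k unfolding g_def kpow_def by (cases a) auto
      qed
    qed
    have gS: "g \<in> S" unfolding Smem
      using u1 u2 u1k u2k unfolding g_def kpow_def by (auto split: sum.split)
    have vQ: "v \<in> Q" unfolding Qmem sg using gS by (simp add: v_def kpow_def)
    have "w = (\<lambda>a. if a \<in> X <+> Z then v (f a) else 0)"
    proof
      fix a show "w a = (if a \<in> X <+> Z then v (f a) else 0)"
      proof (cases a)
        case (Inl x) then show ?thesis
          using wk wx pj[of "Inl (i1 x)"] i1N unfolding f_def g_def kpow_def by (auto simp: InlI)
      next
        case (Inr z) then show ?thesis
          using wk wz pj[of "Inr (o2 z)"] o2M unfolding f_def g_def kpow_def by (auto simp: InrI)
      qed
    qed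
    then show "w \<in> lin_pull (X <+> Z) f Q" unfolding lin_pull_def using vQ by blast
  qed
  show ?thesis using isc tr t1 t2 main by simp
qed

theorem mainTheorem15:
  fixes X :: "'x set" and Y :: "'y set" and Z :: "'z set"
  assumes "finite X" and "finite Y" and "finite Z"
  shows
    \<comment> \<open>morphisms X \<rightarrow> Y are (up to isomorphism) exactly the linear subspaces of k^(X+Y)\<close>
    "(\<forall>c :: ('x, 'y, 'k::field) dcospan. is_dcorel X Y c \<longrightarrow> lin_subspace (X <+> Y) (to_rel X Y c))
   \<and> (\<forall>c c' :: ('x, 'y, 'k) dcospan. is_dcorel X Y c \<longrightarrow> is_dcorel X Y c' \<longrightarrow>
        (to_rel X Y c = to_rel X Y c' \<longleftrightarrow> dcorel_iso X Y c c'))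
   \<and> (\<forall>R :: ('x + 'y \<Rightarrow> 'k) set. lin_subspace (X <+> Y) R \<longrightarrow>
        (\<exists>c :: ('x, 'y, 'k) dcospan. is_dcorel X Y c \<and> to_rel X Y c = R))
    \<comment> \<open>composition is relational composition\<close>
   \<and> (\<forall>(c1 :: ('x, 'y, 'k) dcospan) (c2 :: ('y, 'z, 'k) dcospan). is_dcorel X Y c1 \<longrightarrow> is_dcorel Y Z c2 \<longrightarrow>
        (\<exists>c. is_dcorel_comp X Y Z c1 c2 c)
      \<and> (\<forall>c. is_dcorel_comp X Y Z c1 c2 c \<longrightarrow>
           is_dcorel X Z c \<and> to_rel X Z c = lrel_comp X Y Z (to_rel X Y c1) (to_rel Y Z c2)))
    \<comment> \<open>identities are identity relations\<close>
   \<and> (\<exists>c :: ('x, 'x, 'k) dcospan. is_dcorel_id X c)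
   \<and> (\<forall>c :: ('x, 'x, 'k) dcospan. is_dcorel_id X c \<longrightarrow> is_dcorel X X c \<and> to_rel X X c = lrel_id X)"
proof -
  have A: "\<forall>c :: ('x, 'y, 'k) dcospan. is_dcorel X Y c \<longrightarrow> lin_subspace (X <+> Y) (to_rel X Y c)"
    using part1 by blast
  have B: "\<forall>c c' :: ('x, 'y, 'k) dcospan. is_dcorel X Y c \<longrightarrow> is_dcorel X Y c' \<longrightarrow>
        (to_rel X Y c = to_rel X Y c' \<longleftrightarrow> dcorel_iso X Y c c')"
    using part2 by blast
  have C: "\<forall>R :: ('x + 'y \<Rightarrow> 'k) set. lin_subspace (X <+> Y) R \<longrightarrow>
        (\<exists>c :: ('x, 'y, 'k) dcospan. is_dcorel X Y c \<and> to_rel X Y c = R)"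
    using part3[OF assms(1,2)] by blast
  have D: "\<forall>(c1 :: ('x, 'y, 'k) dcospan) (c2 :: ('y, 'z, 'k) dcospan). is_dcorel X Y c1 \<longrightarrow> is_dcorel Y Z c2 \<longrightarrow>
        (\<exists>c. is_dcorel_comp X Y Z c1 c2 c)
      \<and> (\<forall>c. is_dcorel_comp X Y Z c1 c2 c \<longrightarrow>
           is_dcorel X Z c \<and> to_rel X Z c = lrel_comp X Y Z (to_rel X Y c1) (to_rel Y Z c2))"
    using part4_ex[OF assms(1,3)] part4[OF assms] by blast
  have E: "\<exists>c :: ('x, 'x, 'k) dcospan. is_dcorel_id X c" using part5_ex[OF assms(1)] by blast
  have F: "\<forall>c :: ('x, 'x, 'k) dcospan. is_dcorel_id X c \<longrightarrow> is_dcorel X X c \<and> to_rel X X c = lrel_id X"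
    using part5[OF assms(1)] by blast
  show ?thesis using A B C D E F by blast
qed

end
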